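(* Let $G$ be a connected graph and let $e = \{a,b\}$ be a cut-edge of $G$. Let $G_a$ and $G_b$ be the connected components of $G$ with the edge $e$ removed (containing $a$ and $b$ respectively). Then for any minimal fort $F$ of $G$ with $a, b \notin F$, either $V(G_a) \cap F = \emptyset$ or $V(G_b) \cap F = \emptyset$.
   Context: A fort of a graph $G$ is a nonempty set $F\subseteq V(G)$ such that every vertex outside $F$ is adjacent to either zero or at least two vertices of $F$; it is minimal if no proper subset is a fort. *)

theory Defs
  imports Main
begin

definition graph :: "'a set \<Rightarrow> ('a \<Rightarrow> 'a \<Rightarrow> bool) \<Rightarrow> bool" where
  "graph V E \<longleftrightarrow> finite V \<and> (\<forall>u v. E u v \<longrightarrow> u \<in> V \<and> v \<in> V) \<and>
     (\<forall>u v. E u v \<longrightarrow> E v u) \<and> (\<forall>v. \<not> E v v)"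

definition reachable :: "'a set \<Rightarrow> ('a \<Rightarrow> 'a \<Rightarrow> bool) \<Rightarrow> 'a \<Rightarrow> 'a \<Rightarrow> bool" where
  "reachable V E u v \<longleftrightarrow> u \<in> V \<and> v \<in> V \<and> (\<lambda>x y. E x y \<and> x \<in> V \<and> y \<in> V)\<^sup>*\<^sup>* u v"

definition connected_graph :: "'a set \<Rightarrow> ('a \<Rightarrow> 'a \<Rightarrow> bool) \<Rightarrow> bool" where
  "connected_graph V E \<longleftrightarrow> V \<noteq> {} \<and> (\<forall>u\<in>V. \<forall>v\<in>V. reachable V E u v)"

definition component :: "'a set \<Rightarrow> ('a \<Rightarrow> 'a \<Rightarrow> bool) \<Rightarrow> 'a \<Rightarrow> 'a set" where
  "component V E v = {u. reachable V E v u}"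

definition remove_edge :: "('a \<Rightarrow> 'a \<Rightarrow> bool) \<Rightarrow> 'a \<Rightarrow> 'a \<Rightarrow> ('a \<Rightarrow> 'a \<Rightarrow> bool)" where
  "remove_edge E a b = (\<lambda>x y. E x y \<and> {x, y} \<noteq> {a, b})"

text \<open>{a,b} is a cut-edge: an edge whose removal increases the number of components,
  i.e. a and b are no longer connected.\<close>
definition cut_edge :: "'a set \<Rightarrow> ('a \<Rightarrow> 'a \<Rightarrow> bool) \<Rightarrow> 'a \<Rightarrow> 'a \<Rightarrow> bool" where
  "cut_edge V E a b \<longleftrightarrow> E a b \<and> \<not> reachable V (remove_edge E a b) a b"

definition neighbors :: "'a set \<Rightarrow> ('a \<Rightarrow> 'a \<Rightarrow> bool) \<Rightarrow> 'a \<Rightarrow> 'a set" where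
  "neighbors V E v = {u \<in> V. E v u}"

definition fort :: "'a set \<Rightarrow> ('a \<Rightarrow> 'a \<Rightarrow> bool) \<Rightarrow> 'a set \<Rightarrow> bool" where
  "fort V E F \<longleftrightarrow> F \<noteq> {} \<and> F \<subseteq> V \<and>
     (\<forall>v \<in> V - F. card (neighbors V E v \<inter> F) \<noteq> 1)"

definition minimal_fort :: "'a set \<Rightarrow> ('a \<Rightarrow> 'a \<Rightarrow> bool) \<Rightarrow> 'a set \<Rightarrow> bool" where
  "minimal_fort V E F \<longleftrightarrow> fort V E F \<and> (\<forall>F'. F' \<subset> F \<longrightarrow> \<not> fort V E F')"

end

theory Submission
  imports Defs
begin

lemma rt_sym:
  assumes "\<And>x y. R x y \<Longrightarrow> R y x" and "R\<^sup>*\<^sup>* x y"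
  shows "R\<^sup>*\<^sup>* y x"
  using assms(2)
proof (induction rule: rtranclp_induct)
  case base then show ?case by simp
next
  case (step y z)
  then show ?case using assms(1) by (meson converse_rtranclp_into_rtranclp)
qed

theorem mainTheorem6:
  fixes V :: "'a set" and E :: "'a \<Rightarrow> 'a \<Rightarrow> bool" and a b :: 'a and F :: "'a set"
  assumes "graph V E"
    and "connected_graph V E"
    and "cut_edge V E a b"
    and "minimal_fort V E F"
    and "a \<notin> F" and "b \<notin> F"
  shows "component V (remove_edge E a b) a \<inter> F = {} \<or> component V (remove_edge E a b) b \<inter> F = {}"
proof (rule ccontr)
  define E' where "E' = remove_edge E a b"
  define A where "A = component V E' a"
  define B where "B = component V E' b"
  assume "\<not> ?thesis"
  then obtain p q where p: "p \<in> A" "p \<in> F" and q: "q \<in> B" "q \<in> F"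
    unfolding A_def B_def E'_def by blast
  have g: "finite V" "\<And>u v. E u v \<Longrightarrow> u \<in> V \<and> v \<in> V" "\<And>u v. E u v \<Longrightarrow> E v u"
    using assms(1) unfolding graph_def by auto
  have fF: "fort V E F" and minF: "\<And>F'. F' \<subset> F \<Longrightarrow> \<not> fort V E F'"
    using assms(4) unfolding minimal_fort_def by auto
  have Ecut: "E a b" and nr: "\<not> reachable V E' a b"
    using assms(3) unfolding cut_edge_def E'_def by auto
  have E'sym: "\<And>x y. E' x y \<Longrightarrow> E' y x"
    unfolding E'_def remove_edge_def using g(3) by (auto simp: insert_commute)
  have Rsym: "\<And>x y. (\<lambda>x y. E' x y \<and> x \<in> V \<and> y \<in> V) x y \<Longrightarrow> (\<lambda>x y. E' x y \<and> x \<in> V \<and> y \<in> V) y x"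
    using E'sym by auto
  have stepA: "w \<in> A" if "u \<in> A" "E u w" "{u, w} \<noteq> {a, b}" for u w
  proof -
    have "E' u w" using that unfolding E'_def remove_edge_def by auto
    moreover have "w \<in> V" "u \<in> V" using g(2) that(2) by auto
    ultimately show ?thesis using that(1) unfolding A_def component_def reachable_def
      by (auto intro: rtranclp.rtrancl_into_rtrancl)
  qed
  have qA: "q \<notin> A"
  proof
    assume "q \<in> A"
    then have r1: "(\<lambda>x y. E' x y \<and> x \<in> V \<and> y \<in> V)\<^sup>*\<^sup>* a q" and "a \<in> V" "q \<in> V"
      unfolding A_def component_def reachable_def by auto
    have r2: "(\<lambda>x y. E' x y \<and> x \<in> V \<and> y \<in> V)\<^sup>*\<^sup>* b q" and "b \<in> V"
      using q(1) unfolding B_def component_def reachable_def by auto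
    have "(\<lambda>x y. E' x y \<and> x \<in> V \<and> y \<in> V)\<^sup>*\<^sup>* q b" using rt_sym[OF Rsym r2] .
    with r1 have "(\<lambda>x y. E' x y \<and> x \<in> V \<and> y \<in> V)\<^sup>*\<^sup>* a b" by simp
    with nr \<open>a \<in> V\<close> \<open>b \<in> V\<close> show False unfolding reachable_def by simp
  qed
  have sub: "F \<inter> A \<subset> F" using q qA by blast
  have "fort V E (F \<inter> A)"
    unfolding fort_def
  proof (intro conjI ballI)
    show "F \<inter> A \<noteq> {}" using p by blast
    show "F \<inter> A \<subseteq> V" using fF unfolding fort_def by blast
  next
    fix v assume v: "v \<in> V - F \<inter> A"
    show "card (neighbors V E v \<inter> (F \<inter> A)) \<noteq> 1"
    proof (cases "v \<in> A")
      case True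
      then have vF: "v \<in> V - F" using v by blast
      have "neighbors V E v \<inter> (F \<inter> A) = neighbors V E v \<inter> F"
      proof
        show "neighbors V E v \<inter> F \<subseteq> neighbors V E v \<inter> (F \<inter> A)"
        proof
          fix u assume u: "u \<in> neighbors V E v \<inter> F"
          then have "E v u" "u \<in> F" unfolding neighbors_def by auto
          moreover have "{v, u} \<noteq> {a, b}" using \<open>u \<in> F\<close> assms(5,6) by (auto simp: doubleton_eq_iff)
          ultimately have "u \<in> A" using stepA True by blast
          with u show "u \<in> neighbors V E v \<inter> (F \<inter> A)" by blast
        qed
      qed blast
      then show ?thesis using fF vF unfolding fort_def by auto
    next
      case False
      have "neighbors V E v \<inter> (F \<inter> A) = {}"
      proof (rule ccontr)
        assume "neighbors V E v \<inter> (F \<inter> A) \<noteq> {}"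
        then obtain u where "E v u" "u \<in> F" "u \<in> A" unfolding neighbors_def by auto
        moreover have "{u, v} \<noteq> {a, b}" using \<open>u \<in> F\<close> assms(5,6) by (auto simp: doubleton_eq_iff)
        ultimately have "v \<in> A" using stepA g(3) by blast
        with False show False by simp
      qed
      then show ?thesis by simp
    qed
  qed
  with minF sub show False by blast
qed

end
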